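(* Let $f:X\to Y$ be a morphism in $\mathcal A$. The following are equivalent: (1) $\overline f$ is a monomorphism in $\underline{\mathcal A}$; (2) for every morphism $p:T\to Y$ with $T\in\mathcal T$, if $Z$ is the pullback of $f$ and $p$ with projections $g:Z\to X$ and $h:Z\to T$, then $g$ factors through an object of $\mathcal T$. If moreover $\mathcal T$ is contravariantly finite in $\mathcal A$, then (1) and (2) are also equivalent to: (3) for some $\mathcal T$-precover $p_Y:T_Y\to Y$, the projection $g:Z\to X$ from the pullback $Z$ of $f$ and $p_Y$ factors through an object of $\mathcal T$; (4) in the left triangulated category $\underline{\mathcal A}$ there is a left triangle of the form $\Omega Y\to Z\xrightarrow{\overline 0}X\xrightarrow{\overline f}Y$.
   Context: $\mathcal A$ is an abelian category and $\mathcal T$ is a full additive subcategory of $\mathcal A$ closed under finite direct sums and direct summands. $\langle\mathcal T\rangle$ is the ideal of morphisms of $\mathcal A$ that factor through an object of $\mathcal T$; the stable category $\underline{\mathcal A}=\mathcal A/\langle\mathcal T\rangle$ has the same objects as $\mathcal A$ and $\underline{\mathcal A}(X,Y)=\mathcal A(X,Y)/\langle\mathcal T\rangle(X,Y)$; $\overline f$ denotes the class of $f$ in $\underline{\mathcal A}$. When $\mathcal T$ is contravariantly finite, $\underline{\mathcal A}$ carries the (Beligiannis–Marmaridis) left triangulated structure: the loop functor is $\Omega Y=\ker(p_Y)$ for a $\mathcal T$-precover $p_Y:T_Y\to Y$; for $f:X\to Y$ one forms the pullback $Z$ of $f$ and $p_Y$ with projections $g:Z\to X$, $h:Z\to T_Y$,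 and the morphism $\Omega Y\to Z$ induced by the inclusion $\ker(p_Y)\to T_Y$ and $0:\ker(p_Y)\to X$; the left triangles are the diagrams in $\underline{\mathcal A}$ isomorphic to $\Omega Y\to Z\xrightarrow{\overline g}X\xrightarrow{\overline f}Y$ obtained in this way. *)

theory Defs
  imports Main
begin

text \<open>A (small or large) category presented by an object set, hom-sets of untyped
morphisms, composition (c_comp C g f means g after f), identities, and the
additive structure on hom-sets (c_add, c_zero X Y, c_neg).\<close>

record ('o, 'm) addcat =
  c_ob   :: "'o set"
  c_hom  :: "'o \<Rightarrow> 'o \<Rightarrow> 'm set"
  c_comp :: "'m \<Rightarrow> 'm \<Rightarrow> 'm"
  c_id   :: "'o \<Rightarrow> 'm"
  c_add  :: "'m \<Rightarrow> 'm \<Rightarrow> 'm"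
  c_zero :: "'o \<Rightarrow> 'o \<Rightarrow> 'm"
  c_neg  :: "'m \<Rightarrow> 'm"

definition is_category :: "('o, 'm) addcat \<Rightarrow> bool" where
  "is_category C \<longleftrightarrow>
     (\<forall>X Y. c_hom C X Y \<noteq> {} \<longrightarrow> X \<in> c_ob C \<and> Y \<in> c_ob C) \<and>
     (\<forall>X \<in> c_ob C. c_id C X \<in> c_hom C X X) \<and>
     (\<forall>X Y Z f g. f \<in> c_hom C X Y \<and> g \<in> c_hom C Y Z \<longrightarrow> c_comp C g f \<in> c_hom C X Z) \<and>
     (\<forall>W X Y Z f g h. f \<in> c_hom C W X \<and> g \<in> c_hom C X Y \<and> h \<in> c_hom C Y Z \<longrightarrow>
         c_comp C h (c_comp C g f) = c_comp C (c_comp C h g) f) \<and>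
     (\<forall>X Y f. f \<in> c_hom C X Y \<longrightarrow> c_comp C (c_id C Y) f = f \<and> c_comp C f (c_id C X) = f)"

definition is_preadditive :: "('o, 'm) addcat \<Rightarrow> bool" where
  "is_preadditive C \<longleftrightarrow> is_category C \<and>
     (\<forall>X \<in> c_ob C. \<forall>Y \<in> c_ob C.
        c_zero C X Y \<in> c_hom C X Y \<and>
        (\<forall>f \<in> c_hom C X Y. \<forall>g \<in> c_hom C X Y.
            c_add C f g \<in> c_hom C X Y \<and> c_add C f g = c_add C g f) \<and>
        (\<forall>f \<in> c_hom C X Y. \<forall>g \<in> c_hom C X Y. \<forall>h \<in> c_hom C X Y.
            c_add C (c_add C f g) h = c_add C f (c_add C g h)) \<and>
        (\<forall>f \<in> c_hom C X Y. c_add C f (c_zero C X Y) = f \<and>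
            c_neg C f \<in> c_hom C X Y \<and> c_add C f (c_neg C f) = c_zero C X Y)) \<and>
     (\<forall>X Y Z f g h. f \<in> c_hom C X Y \<and> g \<in> c_hom C X Y \<and> h \<in> c_hom C Y Z \<longrightarrow>
         c_comp C h (c_add C f g) = c_add C (c_comp C h f) (c_comp C h g)) \<and>
     (\<forall>X Y Z f g h. f \<in> c_hom C X Y \<and> g \<in> c_hom C Y Z \<and> h \<in> c_hom C Y Z \<longrightarrow>
         c_comp C (c_add C g h) f = c_add C (c_comp C g f) (c_comp C h f))"

definition is_zero_obj :: "('o, 'm) addcat \<Rightarrow> 'o \<Rightarrow> bool" where
  "is_zero_obj C N \<longleftrightarrow> N \<in> c_ob C \<and>
     (\<forall>X \<in> c_ob C. (\<exists>!u. u \<in> c_hom C N X) \<and> (\<exists>!u. u \<in> c_hom C X N))"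

definition is_biproduct :: "('o, 'm) addcat \<Rightarrow> 'o \<Rightarrow> 'o \<Rightarrow> 'o \<Rightarrow> bool" where
  "is_biproduct C X Y S \<longleftrightarrow> X \<in> c_ob C \<and> Y \<in> c_ob C \<and> S \<in> c_ob C \<and>
     (\<exists>i1 i2 p1 p2. i1 \<in> c_hom C X S \<and> i2 \<in> c_hom C Y S \<and>
        p1 \<in> c_hom C S X \<and> p2 \<in> c_hom C S Y \<and>
        c_comp C p1 i1 = c_id C X \<and> c_comp C p2 i2 = c_id C Y \<and>
        c_comp C p1 i2 = c_zero C Y X \<and> c_comp C p2 i1 = c_zero C X Y \<and>
        c_add C (c_comp C i1 p1) (c_comp C i2 p2) = c_id C S)"

definition is_kernel :: "('o, 'm) addcat \<Rightarrow> 'o \<Rightarrow> 'o \<Rightarrow> 'm \<Rightarrow> 'o \<Rightarrow> 'm \<Rightarrow> bool" where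
  "is_kernel C X Y f K k \<longleftrightarrow> f \<in> c_hom C X Y \<and> K \<in> c_ob C \<and> k \<in> c_hom C K X \<and>
     c_comp C f k = c_zero C K Y \<and>
     (\<forall>W \<in> c_ob C. \<forall>u \<in> c_hom C W X. c_comp C f u = c_zero C W Y \<longrightarrow>
        (\<exists>!v. v \<in> c_hom C W K \<and> c_comp C k v = u))"

definition is_cokernel :: "('o, 'm) addcat \<Rightarrow> 'o \<Rightarrow> 'o \<Rightarrow> 'm \<Rightarrow> 'o \<Rightarrow> 'm \<Rightarrow> bool" where
  "is_cokernel C X Y f Q q \<longleftrightarrow> f \<in> c_hom C X Y \<and> Q \<in> c_ob C \<and> q \<in> c_hom C Y Q \<and>
     c_comp C q f = c_zero C X Q \<and>
     (\<forall>W \<in> c_ob C. \<forall>u \<in> c_hom C Y W. c_comp C u f = c_zero C X W \<longrightarrow>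
        (\<exists>!v. v \<in> c_hom C Q W \<and> c_comp C v q = u))"

definition is_mono :: "('o, 'm) addcat \<Rightarrow> 'o \<Rightarrow> 'o \<Rightarrow> 'm \<Rightarrow> bool" where
  "is_mono C X Y f \<longleftrightarrow> f \<in> c_hom C X Y \<and>
     (\<forall>W \<in> c_ob C. \<forall>u \<in> c_hom C W X. \<forall>v \<in> c_hom C W X.
        c_comp C f u = c_comp C f v \<longrightarrow> u = v)"

definition is_epi :: "('o, 'm) addcat \<Rightarrow> 'o \<Rightarrow> 'o \<Rightarrow> 'm \<Rightarrow> bool" where
  "is_epi C X Y f \<longleftrightarrow> f \<in> c_hom C X Y \<and>
     (\<forall>W \<in> c_ob C. \<forall>u \<in> c_hom C Y W. \<forall>v \<in> c_hom C Y W.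
        c_comp C u f = c_comp C v f \<longrightarrow> u = v)"

definition is_abelian :: "('o, 'm) addcat \<Rightarrow> bool" where
  "is_abelian C \<longleftrightarrow> is_preadditive C \<and>
     (\<exists>N. is_zero_obj C N) \<and>
     (\<forall>X \<in> c_ob C. \<forall>Y \<in> c_ob C. \<exists>S. is_biproduct C X Y S) \<and>
     (\<forall>X Y f. f \<in> c_hom C X Y \<longrightarrow> (\<exists>K k. is_kernel C X Y f K k)) \<and>
     (\<forall>X Y f. f \<in> c_hom C X Y \<longrightarrow> (\<exists>Q q. is_cokernel C X Y f Q q)) \<and>
     (\<forall>X Y f. is_mono C X Y f \<longrightarrow> (\<exists>Z g. is_kernel C Y Z g X f)) \<and>
     (\<forall>X Y f. is_epi C X Y f \<longrightarrow> (\<exists>W g. is_cokernel C W X g Y f))"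

definition good_subcat :: "('o, 'm) addcat \<Rightarrow> 'o set \<Rightarrow> bool" where
  "good_subcat C TT \<longleftrightarrow> TT \<subseteq> c_ob C \<and>
     (\<exists>N \<in> TT. is_zero_obj C N) \<and>
     (\<forall>X Y S. is_biproduct C X Y S \<longrightarrow> X \<in> TT \<longrightarrow> Y \<in> TT \<longrightarrow> S \<in> TT) \<and>
     (\<forall>X Y S. is_biproduct C X Y S \<longrightarrow> S \<in> TT \<longrightarrow> X \<in> TT)"

definition factors_through :: "('o, 'm) addcat \<Rightarrow> 'o set \<Rightarrow> 'o \<Rightarrow> 'o \<Rightarrow> 'm \<Rightarrow> bool" where
  "factors_through C TT X Y f \<longleftrightarrow> f \<in> c_hom C X Y \<and>
     (\<exists>T \<in> TT. \<exists>a \<in> c_hom C X T. \<exists>b \<in> c_hom C T Y. f = c_comp C b a)"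

text \<open>Equality of classes in the stable category A / <TT>.\<close>
definition st_eq :: "('o, 'm) addcat \<Rightarrow> 'o set \<Rightarrow> 'o \<Rightarrow> 'o \<Rightarrow> 'm \<Rightarrow> 'm \<Rightarrow> bool" where
  "st_eq C TT X Y f g \<longleftrightarrow> f \<in> c_hom C X Y \<and> g \<in> c_hom C X Y \<and>
     factors_through C TT X Y (c_add C f (c_neg C g))"

definition stable_mono :: "('o, 'm) addcat \<Rightarrow> 'o set \<Rightarrow> 'o \<Rightarrow> 'o \<Rightarrow> 'm \<Rightarrow> bool" where
  "stable_mono C TT X Y f \<longleftrightarrow> f \<in> c_hom C X Y \<and>
     (\<forall>W \<in> c_ob C. \<forall>u \<in> c_hom C W X. \<forall>v \<in> c_hom C W X.
        st_eq C TT W Y (c_comp C f u) (c_comp C f v) \<longrightarrow> st_eq C TT W X u v)"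

definition stable_iso :: "('o, 'm) addcat \<Rightarrow> 'o set \<Rightarrow> 'o \<Rightarrow> 'o \<Rightarrow> 'm \<Rightarrow> bool" where
  "stable_iso C TT A B a \<longleftrightarrow> a \<in> c_hom C A B \<and>
     (\<exists>b \<in> c_hom C B A. st_eq C TT A A (c_comp C b a) (c_id C A) \<and>
                         st_eq C TT B B (c_comp C a b) (c_id C B))"

definition is_pullback ::
  "('o, 'm) addcat \<Rightarrow> 'o \<Rightarrow> 'o \<Rightarrow> 'o \<Rightarrow> 'm \<Rightarrow> 'm \<Rightarrow> 'o \<Rightarrow> 'm \<Rightarrow> 'm \<Rightarrow> bool" where
  "is_pullback C X Y T f p Z g h \<longleftrightarrow>
     f \<in> c_hom C X Y \<and> p \<in> c_hom C T Y \<and> Z \<in> c_ob C \<and>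
     g \<in> c_hom C Z X \<and> h \<in> c_hom C Z T \<and> c_comp C f g = c_comp C p h \<and>
     (\<forall>W \<in> c_ob C. \<forall>a \<in> c_hom C W X. \<forall>b \<in> c_hom C W T.
        c_comp C f a = c_comp C p b \<longrightarrow>
        (\<exists>!u. u \<in> c_hom C W Z \<and> c_comp C g u = a \<and> c_comp C h u = b))"

definition is_precover :: "('o, 'm) addcat \<Rightarrow> 'o set \<Rightarrow> 'o \<Rightarrow> 'o \<Rightarrow> 'm \<Rightarrow> bool" where
  "is_precover C TT Y TY p \<longleftrightarrow> TY \<in> TT \<and> p \<in> c_hom C TY Y \<and>
     (\<forall>T \<in> TT. \<forall>q \<in> c_hom C T Y. \<exists>r \<in> c_hom C T TY. c_comp C p r = q)"

definition contravariantly_finite :: "('o, 'm) addcat \<Rightarrow> 'o set \<Rightarrow> bool" where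
  "contravariantly_finite C TT \<longleftrightarrow> (\<forall>Y \<in> c_ob C. \<exists>TY p. is_precover C TT Y TY p)"

text \<open>Standard left triangle  \<Omega>Y \<rightarrow> Z \<rightarrow> X \<rightarrow> Y  built from f : X \<rightarrow> Y:
\<Omega>Y = K is the kernel (k : K \<rightarrow> TY) of a precover p : TY \<rightarrow> Y, Z is the pullback of f and p
with projections g, h, and u : K \<rightarrow> Z is induced by k and 0 : K \<rightarrow> X.\<close>
definition std_left_triangle ::
  "('o, 'm) addcat \<Rightarrow> 'o set \<Rightarrow> 'o \<Rightarrow> 'o \<Rightarrow> 'o \<Rightarrow> 'o \<Rightarrow> 'm \<Rightarrow> 'm \<Rightarrow> 'm \<Rightarrow> bool" where
  "std_left_triangle C TT K Z X Y u g f \<longleftrightarrow>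
     (\<exists>TY p k h. is_precover C TT Y TY p \<and> is_kernel C TY Y p K k \<and>
        is_pullback C X Y TY f p Z g h \<and>
        u \<in> c_hom C K Z \<and> c_comp C g u = c_zero C K X \<and> c_comp C h u = k)"

definition left_triangle ::
  "('o, 'm) addcat \<Rightarrow> 'o set \<Rightarrow> 'o \<Rightarrow> 'o \<Rightarrow> 'o \<Rightarrow> 'o \<Rightarrow> 'm \<Rightarrow> 'm \<Rightarrow> 'm \<Rightarrow> bool" where
  "left_triangle C TT A B D E a b c \<longleftrightarrow>
     a \<in> c_hom C A B \<and> b \<in> c_hom C B D \<and> c \<in> c_hom C D E \<and>
     (\<exists>K Z X Y u g f a1 a2 a3 a4.
        std_left_triangle C TT K Z X Y u g f \<and>
        stable_iso C TT A K a1 \<and> stable_iso C TT B Z a2 \<and>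
        stable_iso C TT D X a3 \<and> stable_iso C TT E Y a4 \<and>
        st_eq C TT A Z (c_comp C u a1) (c_comp C a2 a) \<and>
        st_eq C TT B X (c_comp C g a2) (c_comp C a3 b) \<and>
        st_eq C TT D Y (c_comp C f a3) (c_comp C a4 c))"

end

theory Submission
  imports Defs
begin


locale ab =
  fixes C :: "('o,'m) addcat" and TT :: "'o set"
  assumes abel: "is_abelian C" and gs: "good_subcat C TT"
begin

abbreviation cp (infixr "\<cdot>" 70) where "g \<cdot> f \<equiv> c_comp C g f"
abbreviation ad (infixl "\<oplus>" 65) where "f \<oplus> g \<equiv> c_add C f g"
abbreviation ng where "ng f \<equiv> c_neg C f"
abbreviation hm where "hm X Y \<equiv> c_hom C X Y"
abbreviation z where "z X Y \<equiv> c_zero C X Y"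
abbreviation ob where "ob \<equiv> c_ob C"
abbreviation F where "F X Y f \<equiv> factors_through C TT X Y f"
abbreviation E where "E X Y f g \<equiv> st_eq C TT X Y f g"

lemma pre: "is_preadditive C" using abel unfolding is_abelian_def by blast
lemma cat: "is_category C" using pre unfolding is_preadditive_def by blast

lemma hom_ob: "f \<in> hm X Y \<Longrightarrow> X \<in> ob \<and> Y \<in> ob"
  using cat unfolding is_category_def by blast
lemma id_hom: "X \<in> ob \<Longrightarrow> c_id C X \<in> hm X X"
  using cat unfolding is_category_def by blast
lemma comp_hom[intro]: "f \<in> hm X Y \<Longrightarrow> g \<in> hm Y Z \<Longrightarrow> g \<cdot> f \<in> hm X Z"
  using cat unfolding is_category_def by blast
lemma assoc: "f \<in> hm W X \<Longrightarrow> g \<in> hm X Y \<Longrightarrow> h \<in> hm Y Z \<Longrightarrow> h \<cdot> (g \<cdot> f) = (h \<cdot> g) \<cdot> f"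
  using cat unfolding is_category_def by blast
lemma id_l: "f \<in> hm X Y \<Longrightarrow> c_id C Y \<cdot> f = f"
  using cat unfolding is_category_def by blast
lemma id_r: "f \<in> hm X Y \<Longrightarrow> f \<cdot> c_id C X = f"
  using cat unfolding is_category_def by blast

lemma grp: "X \<in> ob \<Longrightarrow> Y \<in> ob \<Longrightarrow> c_zero C X Y \<in> c_hom C X Y \<and>
        (\<forall>f \<in> c_hom C X Y. \<forall>g \<in> c_hom C X Y.
            c_add C f g \<in> c_hom C X Y \<and> c_add C f g = c_add C g f) \<and>
        (\<forall>f \<in> c_hom C X Y. \<forall>g \<in> c_hom C X Y. \<forall>h \<in> c_hom C X Y.
            c_add C (c_add C f g) h = c_add C f (c_add C g h)) \<and>
        (\<forall>f \<in> c_hom C X Y. c_add C f (c_zero C X Y) = f \<and>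
            c_neg C f \<in> c_hom C X Y \<and> c_add C f (c_neg C f) = c_zero C X Y)"
proof -
  assume X: "X \<in> ob" and Y: "Y \<in> ob"
  have "\<forall>X \<in> c_ob C. \<forall>Y \<in> c_ob C.
        c_zero C X Y \<in> c_hom C X Y \<and>
        (\<forall>f \<in> c_hom C X Y. \<forall>g \<in> c_hom C X Y.
            c_add C f g \<in> c_hom C X Y \<and> c_add C f g = c_add C g f) \<and>
        (\<forall>f \<in> c_hom C X Y. \<forall>g \<in> c_hom C X Y. \<forall>h \<in> c_hom C X Y.
            c_add C (c_add C f g) h = c_add C f (c_add C g h)) \<and>
        (\<forall>f \<in> c_hom C X Y. c_add C f (c_zero C X Y) = f \<and>
            c_neg C f \<in> c_hom C X Y \<and> c_add C f (c_neg C f) = c_zero C X Y)"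
    using pre unfolding is_preadditive_def by (elim conjE)
  from bspec[OF bspec[OF this X] Y] show ?thesis .
qed
lemma zero_hom[intro]: "X \<in> ob \<Longrightarrow> Y \<in> ob \<Longrightarrow> z X Y \<in> hm X Y"
  using grp by blast
lemma add_hom[intro]: "f \<in> hm X Y \<Longrightarrow> g \<in> hm X Y \<Longrightarrow> f \<oplus> g \<in> hm X Y"
proof - assume a: "f \<in> hm X Y" "g \<in> hm X Y" show ?thesis using grp[of X Y] hom_ob[OF a(1)] a by blast qed
lemma add_comm: "f \<in> hm X Y \<Longrightarrow> g \<in> hm X Y \<Longrightarrow> f \<oplus> g = g \<oplus> f"
proof - assume a: "f \<in> hm X Y" "g \<in> hm X Y" show ?thesis using grp[of X Y] hom_ob[OF a(1)] a by blast qed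
lemma add_assoc: "f \<in> hm X Y \<Longrightarrow> g \<in> hm X Y \<Longrightarrow> h \<in> hm X Y \<Longrightarrow> f \<oplus> g \<oplus> h = f \<oplus> (g \<oplus> h)"
proof - assume a: "f \<in> hm X Y" "g \<in> hm X Y" "h \<in> hm X Y" show ?thesis using grp[of X Y] hom_ob[OF a(1)] a by blast qed
lemma add_zero: "f \<in> hm X Y \<Longrightarrow> f \<oplus> z X Y = f"
proof - assume a: "f \<in> hm X Y" show ?thesis using grp[of X Y] hom_ob[OF a(1)] a by blast qed
lemma neg_hom[intro]: "f \<in> hm X Y \<Longrightarrow> ng f \<in> hm X Y"
proof - assume a: "f \<in> hm X Y" show ?thesis using grp[of X Y] hom_ob[OF a(1)] a by blast qed
lemma add_neg: "f \<in> hm X Y \<Longrightarrow> f \<oplus> ng f = z X Y"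
proof - assume a: "f \<in> hm X Y" show ?thesis using grp[of X Y] hom_ob[OF a(1)] a by blast qed
lemma comp_add_l: "f \<in> hm X Y \<Longrightarrow> g \<in> hm X Y \<Longrightarrow> h \<in> hm Y Z \<Longrightarrow> h \<cdot> (f \<oplus> g) = h \<cdot> f \<oplus> h \<cdot> g"
proof -
  have "\<forall>X Y Z f g h. f \<in> c_hom C X Y \<and> g \<in> c_hom C X Y \<and> h \<in> c_hom C Y Z \<longrightarrow>
         c_comp C h (c_add C f g) = c_add C (c_comp C h f) (c_comp C h g)"
    using pre unfolding is_preadditive_def by (elim conjE)
  thus "f \<in> hm X Y \<Longrightarrow> g \<in> hm X Y \<Longrightarrow> h \<in> hm Y Z \<Longrightarrow> h \<cdot> (f \<oplus> g) = h \<cdot> f \<oplus> h \<cdot> g" by blast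
qed
lemma comp_add_r: "f \<in> hm X Y \<Longrightarrow> g \<in> hm Y Z \<Longrightarrow> h \<in> hm Y Z \<Longrightarrow> (g \<oplus> h) \<cdot> f = g \<cdot> f \<oplus> h \<cdot> f"
proof -
  have "\<forall>X Y Z f g h. f \<in> c_hom C X Y \<and> g \<in> c_hom C Y Z \<and> h \<in> c_hom C Y Z \<longrightarrow>
         c_comp C (c_add C g h) f = c_add C (c_comp C g f) (c_comp C h f)"
    using pre unfolding is_preadditive_def by (elim conjE)
  thus "f \<in> hm X Y \<Longrightarrow> g \<in> hm Y Z \<Longrightarrow> h \<in> hm Y Z \<Longrightarrow> (g \<oplus> h) \<cdot> f = g \<cdot> f \<oplus> h \<cdot> f" by blast
qed

lemma zero_add: "f \<in> hm X Y \<Longrightarrow> z X Y \<oplus> f = f"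
  by (metis add_comm add_zero hom_ob zero_hom)
lemma neg_add: "f \<in> hm X Y \<Longrightarrow> ng f \<oplus> f = z X Y"
  by (metis add_comm add_neg neg_hom)
lemma cancel: "a \<in> hm X Y \<Longrightarrow> b \<in> hm X Y \<Longrightarrow> c \<in> hm X Y \<Longrightarrow> a \<oplus> c = b \<oplus> c \<Longrightarrow> a = b"
proof -
  assume h: "a \<in> hm X Y" "b \<in> hm X Y" "c \<in> hm X Y" and e: "a \<oplus> c = b \<oplus> c"
  have n: "ng c \<in> hm X Y" using h by blast
  have "a = a \<oplus> (c \<oplus> ng c)" using add_zero[OF h(1)] add_neg[OF h(3)] by simp
  also have "\<dots> = (a \<oplus> c) \<oplus> ng c" using add_assoc[OF h(1) h(3) n] by simp
  also have "\<dots> = (b \<oplus> c) \<oplus> ng c" using e by simp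
  also have "\<dots> = b \<oplus> (c \<oplus> ng c)" using add_assoc[OF h(2) h(3) n] by simp
  also have "\<dots> = b" using add_zero[OF h(2)] add_neg[OF h(3)] by simp
  finally show ?thesis .
qed
lemma neg_unique: "a \<in> hm X Y \<Longrightarrow> b \<in> hm X Y \<Longrightarrow> a \<oplus> b = z X Y \<Longrightarrow> b = ng a"
proof -
  assume h: "a \<in> hm X Y" "b \<in> hm X Y" and e: "a \<oplus> b = z X Y"
  have n: "ng a \<in> hm X Y" using h by blast
  have "b = (ng a \<oplus> a) \<oplus> b" using zero_add[OF h(2)] neg_add[OF h(1)] by simp
  also have "\<dots> = ng a \<oplus> (a \<oplus> b)" using add_assoc[OF n h(1) h(2)] by simp
  also have "\<dots> = ng a" using e add_zero[OF n] by simp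
  finally show ?thesis .
qed
lemma neg_neg: "a \<in> hm X Y \<Longrightarrow> ng (ng a) = a"
proof -
  assume h: "a \<in> hm X Y"
  have "a = ng (ng a)" using neg_unique[of "ng a" X Y a] neg_add[OF h] h by blast
  thus ?thesis by simp
qed
lemma neg_dist: "a \<in> hm X Y \<Longrightarrow> b \<in> hm X Y \<Longrightarrow> ng (a \<oplus> b) = ng a \<oplus> ng b"
proof -
  assume a: "a \<in> hm X Y" and b: "b \<in> hm X Y"
  have na: "ng a \<in> hm X Y" and nb: "ng b \<in> hm X Y" using a b by blast+
  have "(a \<oplus> b) \<oplus> (ng a \<oplus> ng b) = a \<oplus> (b \<oplus> (ng a \<oplus> ng b))"
    using add_assoc[OF a b add_hom[OF na nb]] by simp
  also have "\<dots> = a \<oplus> (b \<oplus> (ng b \<oplus> ng a))" using add_comm[OF na nb] by simp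
  also have "\<dots> = a \<oplus> ((b \<oplus> ng b) \<oplus> ng a)" using add_assoc[OF b nb na] by simp
  also have "\<dots> = a \<oplus> ng a" using add_neg[OF b] zero_add[OF na] by simp
  also have "\<dots> = z X Y" using add_neg[OF a] .
  finally show ?thesis using neg_unique[OF add_hom[OF a b] add_hom[OF na nb]] by simp
qed
lemma comp_zero: "h \<in> hm Y Z \<Longrightarrow> X \<in> ob \<Longrightarrow> h \<cdot> z X Y = z X Z"
proof -
  assume h: "h \<in> hm Y Z" and X: "X \<in> ob"
  have Y: "Y \<in> ob" "Z \<in> ob" using h hom_ob by blast+
  have 0: "z X Y \<in> hm X Y" using X Y by blast
  have hz: "h \<cdot> z X Y \<in> hm X Z" using 0 h by blast
  have "h \<cdot> z X Y \<oplus> h \<cdot> z X Y = h \<cdot> (z X Y \<oplus> z X Y)" using comp_add_l[OF 0 0 h] by simp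
  also have "\<dots> = h \<cdot> z X Y" using add_zero[OF 0] by simp
  also have "\<dots> = z X Z \<oplus> h \<cdot> z X Y" using zero_add[OF hz] by simp
  finally show ?thesis by (rule cancel[OF hz zero_hom[OF X Y(2)] hz])
qed
lemma zero_comp: "f \<in> hm X Y \<Longrightarrow> Z \<in> ob \<Longrightarrow> z Y Z \<cdot> f = z X Z"
proof -
  assume h: "f \<in> hm X Y" and X: "Z \<in> ob"
  have Y: "Y \<in> ob" "X \<in> ob" using h hom_ob by blast+
  have 0: "z Y Z \<in> hm Y Z" using X Y by blast
  have hz: "z Y Z \<cdot> f \<in> hm X Z" using 0 h by blast
  have "z Y Z \<cdot> f \<oplus> z Y Z \<cdot> f = (z Y Z \<oplus> z Y Z) \<cdot> f" using comp_add_r[OF h 0 0] by simp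
  also have "\<dots> = z Y Z \<cdot> f" using add_zero[OF 0] by simp
  also have "\<dots> = z X Z \<oplus> z Y Z \<cdot> f" using zero_add[OF hz] by simp
  finally show ?thesis by (rule cancel[OF hz zero_hom[OF Y(2) X] hz])
qed
lemma comp_neg_l: "f \<in> hm X Y \<Longrightarrow> h \<in> hm Y Z \<Longrightarrow> h \<cdot> ng f = ng (h \<cdot> f)"
proof -
  assume f: "f \<in> hm X Y" and h: "h \<in> hm Y Z"
  have nf: "ng f \<in> hm X Y" using f by blast
  have X: "X \<in> ob" using f hom_ob by blast
  have "h \<cdot> f \<oplus> h \<cdot> ng f = h \<cdot> (f \<oplus> ng f)" using comp_add_l[OF f nf h] by simp
  also have "\<dots> = z X Z" using add_neg[OF f] comp_zero[OF h X] by simp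
  finally show ?thesis by (rule neg_unique[OF comp_hom[OF f h] comp_hom[OF nf h]])
qed
lemma comp_neg_r: "f \<in> hm X Y \<Longrightarrow> h \<in> hm Y Z \<Longrightarrow> ng h \<cdot> f = ng (h \<cdot> f)"
proof -
  assume f: "f \<in> hm X Y" and h: "h \<in> hm Y Z"
  have nh: "ng h \<in> hm Y Z" using h by blast
  have Z: "Z \<in> ob" using h hom_ob by blast
  have "h \<cdot> f \<oplus> ng h \<cdot> f = (h \<oplus> ng h) \<cdot> f" using comp_add_r[OF f h nh] by simp
  also have "\<dots> = z X Z" using add_neg[OF h] zero_comp[OF f Z] by simp
  finally show ?thesis by (rule neg_unique[OF comp_hom[OF f h] comp_hom[OF f nh]])
qed
lemma neg_zero: "X \<in> ob \<Longrightarrow> Y \<in> ob \<Longrightarrow> ng (z X Y) = z X Y"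
proof -
  assume "X \<in> ob" "Y \<in> ob"
  hence 0: "z X Y \<in> hm X Y" by blast
  show ?thesis using neg_unique[OF 0 0] add_zero[OF 0] by simp
qed

lemma zero_obj: "\<exists>N\<in>TT. is_zero_obj C N" using gs unfolding good_subcat_def by blast
lemma TT_ob: "T \<in> TT \<Longrightarrow> T \<in> ob" using gs unfolding good_subcat_def by blast

lemma F_def: "F X Y f \<longleftrightarrow> f \<in> hm X Y \<and> (\<exists>T\<in>TT. \<exists>a\<in>hm X T. \<exists>b\<in>hm T Y. f = b \<cdot> a)"
  unfolding factors_through_def by blast

lemma F_zero: "X \<in> ob \<Longrightarrow> Y \<in> ob \<Longrightarrow> F X Y (z X Y)"
proof -
  assume X: "X \<in> ob" and Y: "Y \<in> ob"
  obtain N where N: "N \<in> TT" "is_zero_obj C N" using zero_obj by blast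
  have Nob: "N \<in> ob" using N TT_ob by blast
  have "z N Y \<cdot> z X N = z X Y" using zero_comp[of "z X N" X N Y] X Y Nob by blast
  thus ?thesis unfolding F_def using N X Y Nob by (metis zero_hom)
qed
lemma F_hom: "F X Y f \<Longrightarrow> f \<in> hm X Y" unfolding F_def by blast
lemma F_comp_l: "F X Y x \<Longrightarrow> b \<in> hm Y Y' \<Longrightarrow> F X Y' (b \<cdot> x)"
proof -
  assume "F X Y x" and b: "b \<in> hm Y Y'"
  then obtain T a c where t: "T \<in> TT" "a \<in> hm X T" "c \<in> hm T Y" "x = c \<cdot> a" "x \<in> hm X Y"
    unfolding F_def by blast
  have "b \<cdot> x = (b \<cdot> c) \<cdot> a" using t(4) assoc[OF t(2) t(3) b] by simp
  moreover have "b \<cdot> c \<in> hm T Y'" using t(3) b by blast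
  moreover have "b \<cdot> x \<in> hm X Y'" using t(5) b by blast
  ultimately show ?thesis unfolding F_def using t by blast
qed
lemma F_comp_r: "F X Y x \<Longrightarrow> a' \<in> hm W X \<Longrightarrow> F W Y (x \<cdot> a')"
proof -
  assume "F X Y x" and b: "a' \<in> hm W X"
  then obtain T a c where t: "T \<in> TT" "a \<in> hm X T" "c \<in> hm T Y" "x = c \<cdot> a" "x \<in> hm X Y"
    unfolding F_def by blast
  have "x \<cdot> a' = c \<cdot> (a \<cdot> a')" using t(4) assoc[OF b t(2) t(3)] by simp
  moreover have "a \<cdot> a' \<in> hm W T" using t(2) b by blast
  moreover have "x \<cdot> a' \<in> hm W Y" using t(5) b by blast
  ultimately show ?thesis unfolding F_def using t by blast
qed
lemma F_neg: "F X Y x \<Longrightarrow> F X Y (ng x)"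
proof -
  assume "F X Y x"
  then obtain T a c where t: "T \<in> TT" "a \<in> hm X T" "c \<in> hm T Y" "x = c \<cdot> a" "x \<in> hm X Y"
    unfolding F_def by blast
  have "ng x = ng c \<cdot> a" using t(4) comp_neg_r[OF t(2) t(3)] by simp
  moreover have "ng c \<in> hm T Y" using t(3) by blast
  moreover have "ng x \<in> hm X Y" using t(5) by blast
  ultimately show ?thesis unfolding F_def using t by blast
qed
lemma F_add: "F X Y x \<Longrightarrow> F X Y y \<Longrightarrow> F X Y (x \<oplus> y)"
proof -
  assume "F X Y x" "F X Y y"
  then obtain T1 a1 b1 T2 a2 b2 where t: "T1 \<in> TT" "a1 \<in> hm X T1" "b1 \<in> hm T1 Y" "x = b1 \<cdot> a1"
     "T2 \<in> TT" "a2 \<in> hm X T2" "b2 \<in> hm T2 Y" "y = b2 \<cdot> a2" unfolding F_def by blast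
  obtain S where S: "is_biproduct C T1 T2 S" using abel t TT_ob unfolding is_abelian_def by blast
  have ST: "S \<in> TT" using gs S t unfolding good_subcat_def by blast
  obtain i1 i2 p1 p2 where bp: "i1 \<in> hm T1 S" "i2 \<in> hm T2 S" "p1 \<in> hm S T1" "p2 \<in> hm S T2"
     "p1 \<cdot> i1 = c_id C T1" "p2 \<cdot> i2 = c_id C T2" "p1 \<cdot> i2 = z T2 T1" "p2 \<cdot> i1 = z T1 T2"
     using S unfolding is_biproduct_def by blast
  have ob: "T1 \<in> ob" "T2 \<in> ob" "S \<in> ob" "X \<in> ob" "Y \<in> ob" using t TT_ob ST hom_ob by blast+
  define m where "m = b1 \<cdot> p1 \<oplus> b2 \<cdot> p2"
  define e where "e = i1 \<cdot> a1 \<oplus> i2 \<cdot> a2"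
  have m: "m \<in> hm S Y" unfolding m_def using t bp by blast
  have e: "e \<in> hm X S" unfolding e_def using t bp by blast
  have m1: "m \<cdot> i1 = b1"
  proof -
    have "m \<cdot> i1 = (b1 \<cdot> p1) \<cdot> i1 \<oplus> (b2 \<cdot> p2) \<cdot> i1" unfolding m_def using comp_add_r t bp by blast
    also have "\<dots> = b1 \<cdot> (p1 \<cdot> i1) \<oplus> b2 \<cdot> (p2 \<cdot> i1)"
      using assoc[OF bp(1) bp(3) t(3)] assoc[OF bp(1) bp(4) t(7)] by simp
    also have "\<dots> = b1" using bp(5,8) id_r[OF t(3)] comp_zero[OF t(7) ob(1)] add_zero[OF t(3)] by simp
    finally show ?thesis .
  qed
  have m2: "m \<cdot> i2 = b2"
  proof -
    have "m \<cdot> i2 = (b1 \<cdot> p1) \<cdot> i2 \<oplus> (b2 \<cdot> p2) \<cdot> i2" unfolding m_def using comp_add_r t bp by blast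
    also have "\<dots> = b1 \<cdot> (p1 \<cdot> i2) \<oplus> b2 \<cdot> (p2 \<cdot> i2)"
      using assoc[OF bp(2) bp(3) t(3)] assoc[OF bp(2) bp(4) t(7)] by simp
    also have "\<dots> = b2" using bp(6,7) id_r[OF t(7)] comp_zero[OF t(3) ob(2)] zero_add[OF t(7)] by simp
    finally show ?thesis .
  qed
  have "m \<cdot> e = m \<cdot> (i1 \<cdot> a1) \<oplus> m \<cdot> (i2 \<cdot> a2)" unfolding e_def using comp_add_l t bp m by blast
  also have "\<dots> = x \<oplus> y" using assoc[OF t(2) bp(1) m] assoc[OF t(6) bp(2) m] m1 m2 t(4,8) by simp
  finally have "x \<oplus> y = m \<cdot> e" by simp
  moreover have "x \<oplus> y \<in> hm X Y" using t by blast
  ultimately show ?thesis unfolding F_def using ST m e by blast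
qed

lemma E_def: "E X Y f g \<longleftrightarrow> f \<in> hm X Y \<and> g \<in> hm X Y \<and> F X Y (f \<oplus> ng g)"
  unfolding st_eq_def by blast
lemma E_refl: "f \<in> hm X Y \<Longrightarrow> E X Y f f"
proof -
  assume f: "f \<in> hm X Y"
  have "F X Y (z X Y)" using F_zero hom_ob[OF f] by blast
  thus ?thesis unfolding E_def using f add_neg[OF f] by simp
qed
lemma E_eq: "f \<in> hm X Y \<Longrightarrow> f = g \<Longrightarrow> E X Y f g"
  using E_refl by blast
lemma E_sym: "E X Y f g \<Longrightarrow> E X Y g f"
proof -
  assume a: "E X Y f g"
  hence h: "f \<in> hm X Y" "g \<in> hm X Y" and F: "F X Y (f \<oplus> ng g)" unfolding E_def by blast+
  have "ng (f \<oplus> ng g) = ng f \<oplus> g" using neg_dist[OF h(1) neg_hom[OF h(2)]] neg_neg[OF h(2)] by simp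
  also have "\<dots> = g \<oplus> ng f" using add_comm[OF neg_hom[OF h(1)] h(2)] .
  finally show ?thesis unfolding E_def using h F_neg[OF F] by simp
qed
lemma E_trans: "E X Y f g \<Longrightarrow> E X Y g h \<Longrightarrow> E X Y f h"
proof -
  assume a: "E X Y f g" "E X Y g h"
  hence h: "f \<in> hm X Y" "g \<in> hm X Y" "h \<in> hm X Y" and F: "F X Y (f \<oplus> ng g)" "F X Y (g \<oplus> ng h)"
    unfolding E_def by blast+
  have ng: "ng g \<in> hm X Y" "ng h \<in> hm X Y" using h by blast+
  have "(f \<oplus> ng g) \<oplus> (g \<oplus> ng h) = f \<oplus> (ng g \<oplus> (g \<oplus> ng h))" using add_assoc[OF h(1) ng(1) add_hom[OF h(2) ng(2)]] .
  also have "\<dots> = f \<oplus> ((ng g \<oplus> g) \<oplus> ng h)" using add_assoc[OF ng(1) h(2) ng(2)] by simp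
  also have "\<dots> = f \<oplus> ng h" using neg_add[OF h(2)] zero_add[OF ng(2)] by simp
  finally show ?thesis using F_add[OF F] h unfolding E_def by simp
qed
lemma E_zero_iff: "f \<in> hm X Y \<Longrightarrow> E X Y f (z X Y) \<longleftrightarrow> F X Y f"
proof -
  assume f: "f \<in> hm X Y"
  have ob: "X \<in> ob" "Y \<in> ob" using hom_ob[OF f] by blast+
  show ?thesis unfolding E_def using f neg_zero[OF ob] add_zero[OF f] zero_hom[OF ob] by simp
qed
lemma E_comp_l: "E X Y f g \<Longrightarrow> h \<in> hm Y Z \<Longrightarrow> E X Z (h \<cdot> f) (h \<cdot> g)"
proof -
  assume a: "E X Y f g" and hh: "h \<in> hm Y Z"
  hence h: "f \<in> hm X Y" "g \<in> hm X Y" and F: "F X Y (f \<oplus> ng g)" unfolding E_def by blast+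
  have "h \<cdot> (f \<oplus> ng g) = h \<cdot> f \<oplus> ng (h \<cdot> g)" using comp_add_l[OF h(1) neg_hom[OF h(2)] hh] comp_neg_l[OF h(2) hh] by simp
  thus ?thesis using F_comp_l[OF F hh] h hh unfolding E_def by auto
qed
lemma E_comp_r: "E X Y f g \<Longrightarrow> h \<in> hm W X \<Longrightarrow> E W Y (f \<cdot> h) (g \<cdot> h)"
proof -
  assume a: "E X Y f g" and hh: "h \<in> hm W X"
  hence h: "f \<in> hm X Y" "g \<in> hm X Y" and F: "F X Y (f \<oplus> ng g)" unfolding E_def by blast+
  have "(f \<oplus> ng g) \<cdot> h = f \<cdot> h \<oplus> ng (g \<cdot> h)" using comp_add_r[OF hh h(1) neg_hom[OF h(2)]] comp_neg_r[OF hh h(2)] by simp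
  thus ?thesis using F_comp_r[OF F hh] h hh unfolding E_def by auto
qed

end

context ab begin

lemma sub_zero: "x \<in> hm X Y \<Longrightarrow> y \<in> hm X Y \<Longrightarrow> x \<oplus> ng y = z X Y \<Longrightarrow> x = y"
proof -
  assume h: "x \<in> hm X Y" "y \<in> hm X Y" "x \<oplus> ng y = z X Y"
  have "ng y = ng x" using neg_unique[OF h(1) neg_hom[OF h(2)] h(3)] .
  hence "ng (ng y) = ng (ng x)" by simp
  thus ?thesis using neg_neg h by simp
qed

lemma pullback_ex:
  assumes f: "f \<in> hm X Y" and b: "b \<in> hm T Y"
  shows "\<exists>Z g h. is_pullback C X Y T f b Z g h"
proof -
  have ob: "X \<in> ob" "Y \<in> ob" "T \<in> ob" using f b hom_ob by blast+
  obtain S where S: "is_biproduct C X T S" using abel ob unfolding is_abelian_def by blast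
  obtain i1 i2 p1 p2 where bp: "i1 \<in> hm X S" "i2 \<in> hm T S" "p1 \<in> hm S X" "p2 \<in> hm S T"
     "p1 \<cdot> i1 = c_id C X" "p2 \<cdot> i2 = c_id C T" "p1 \<cdot> i2 = z T X" "p2 \<cdot> i1 = z X T"
     "i1 \<cdot> p1 \<oplus> i2 \<cdot> p2 = c_id C S"
     using S unfolding is_biproduct_def by blast
  have Sob: "S \<in> ob" using S unfolding is_biproduct_def by blast
  define phi where "phi = f \<cdot> p1 \<oplus> ng (b \<cdot> p2)"
  have phi: "phi \<in> hm S Y" unfolding phi_def using f b bp by blast
  obtain K k where K: "is_kernel C S Y phi K k" using abel phi unfolding is_abelian_def by blast
  have k: "k \<in> hm K S" "K \<in> ob" and k0: "phi \<cdot> k = z K Y"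
    and kU: "\<And>W u. W \<in> ob \<Longrightarrow> u \<in> hm W S \<Longrightarrow> phi \<cdot> u = z W Y \<Longrightarrow> (\<exists>!v. v \<in> hm W K \<and> k \<cdot> v = u)"
    using K unfolding is_kernel_def by blast+
  define g where "g = p1 \<cdot> k"
  define h where "h = p2 \<cdot> k"
  have g: "g \<in> hm K X" and h: "h \<in> hm K T" unfolding g_def h_def using k bp by blast+
  have phik: "phi \<cdot> k = f \<cdot> g \<oplus> ng (b \<cdot> h)"
  proof -
    have "phi \<cdot> k = (f \<cdot> p1) \<cdot> k \<oplus> ng (b \<cdot> p2) \<cdot> k" unfolding phi_def
      using comp_add_r[of k K S "f \<cdot> p1" Y] k bp f b by blast
    also have "\<dots> = f \<cdot> g \<oplus> ng (b \<cdot> h)" unfolding g_def h_def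
      using assoc[OF k(1) bp(3) f] comp_neg_r[OF k(1) comp_hom[OF bp(4) b]] assoc[OF k(1) bp(4) b] by simp
    finally show ?thesis .
  qed
  have "f \<cdot> g \<oplus> ng (b \<cdot> h) = z K Y" using phik k0 by simp
  hence comm: "f \<cdot> g = b \<cdot> h" by (rule sub_zero[OF comp_hom[OF g f] comp_hom[OF h b]])
  have phi1: "phi \<cdot> i1 = f"
  proof -
    have "phi \<cdot> i1 = (f \<cdot> p1) \<cdot> i1 \<oplus> ng (b \<cdot> p2) \<cdot> i1" unfolding phi_def
      using comp_add_r bp f b by blast
    also have "\<dots> = f \<cdot> (p1 \<cdot> i1) \<oplus> ng (b \<cdot> (p2 \<cdot> i1))"
      using assoc[OF bp(1) bp(3) f] comp_neg_r[OF bp(1) comp_hom[OF bp(4) b]] assoc[OF bp(1) bp(4) b] by simp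
    also have "\<dots> = f" using bp(5,8) id_r[OF f] comp_zero[OF b ob(1)] neg_zero[OF ob(1,2)] add_zero[OF f] by simp
    finally show ?thesis .
  qed
  have phi2: "phi \<cdot> i2 = ng b"
  proof -
    have "phi \<cdot> i2 = (f \<cdot> p1) \<cdot> i2 \<oplus> ng (b \<cdot> p2) \<cdot> i2" unfolding phi_def
      using comp_add_r bp f b by blast
    also have "\<dots> = f \<cdot> (p1 \<cdot> i2) \<oplus> ng (b \<cdot> (p2 \<cdot> i2))"
      using assoc[OF bp(2) bp(3) f] comp_neg_r[OF bp(2) comp_hom[OF bp(4) b]] assoc[OF bp(2) bp(4) b] by simp
    also have "\<dots> = ng b" using bp(6,7) id_r[OF b] comp_zero[OF f ob(3)] zero_add[OF neg_hom[OF b]] by simp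
    finally show ?thesis .
  qed
  have "is_pullback C X Y T f b K g h"
    unfolding is_pullback_def
  proof (intro conjI ballI impI)
    fix W a c assume W: "W \<in> ob" and a: "a \<in> hm W X" and c: "c \<in> hm W T" and e: "f \<cdot> a = b \<cdot> c"
    define ee where "ee = i1 \<cdot> a \<oplus> i2 \<cdot> c"
    have ee: "ee \<in> hm W S" unfolding ee_def using a c bp by blast
    have "phi \<cdot> ee = phi \<cdot> (i1 \<cdot> a) \<oplus> phi \<cdot> (i2 \<cdot> c)" unfolding ee_def
      using comp_add_l a c bp phi by blast
    also have "\<dots> = f \<cdot> a \<oplus> ng b \<cdot> c" using assoc[OF a bp(1) phi] assoc[OF c bp(2) phi] phi1 phi2 by simp
    also have "\<dots> = z W Y" using e comp_neg_r[OF c b] add_neg[OF comp_hom[OF c b]] by simp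
    finally have pe: "phi \<cdot> ee = z W Y" .
    have p1e: "p1 \<cdot> ee = a"
    proof -
      have "p1 \<cdot> ee = p1 \<cdot> (i1 \<cdot> a) \<oplus> p1 \<cdot> (i2 \<cdot> c)" unfolding ee_def using comp_add_l a c bp by blast
      also have "\<dots> = (p1 \<cdot> i1) \<cdot> a \<oplus> (p1 \<cdot> i2) \<cdot> c" using assoc[OF a bp(1) bp(3)] assoc[OF c bp(2) bp(3)] by simp
      also have "\<dots> = a" using bp(5,7) id_l[OF a] zero_comp[OF c ob(1)] add_zero[OF a] by simp
      finally show ?thesis .
    qed
    have p2e: "p2 \<cdot> ee = c"
    proof -
      have "p2 \<cdot> ee = p2 \<cdot> (i1 \<cdot> a) \<oplus> p2 \<cdot> (i2 \<cdot> c)" unfolding ee_def using comp_add_l a c bp by blast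
      also have "\<dots> = (p2 \<cdot> i1) \<cdot> a \<oplus> (p2 \<cdot> i2) \<cdot> c" using assoc[OF a bp(1) bp(4)] assoc[OF c bp(2) bp(4)] by simp
      also have "\<dots> = c" using bp(6,8) id_l[OF c] zero_comp[OF a ob(3)] zero_add[OF c] by simp
      finally show ?thesis .
    qed
    obtain v where v: "v \<in> hm W K" "k \<cdot> v = ee" using kU[OF W ee pe] by blast
    show "\<exists>!u. u \<in> hm W K \<and> g \<cdot> u = a \<and> h \<cdot> u = c"
    proof (rule ex1I[of _ v])
      show "v \<in> hm W K \<and> g \<cdot> v = a \<and> h \<cdot> v = c"
        using v p1e p2e unfolding g_def h_def using assoc[OF v(1) k(1) bp(3)] assoc[OF v(1) k(1) bp(4)] by simp
    next
      fix v' assume v': "v' \<in> hm W K \<and> g \<cdot> v' = a \<and> h \<cdot> v' = c"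
      have kv: "k \<cdot> v' \<in> hm W S" using v' k by blast
      have "k \<cdot> v' = c_id C S \<cdot> (k \<cdot> v')" using id_l[OF kv] by simp
      also have "\<dots> = (i1 \<cdot> p1) \<cdot> (k \<cdot> v') \<oplus> (i2 \<cdot> p2) \<cdot> (k \<cdot> v')"
        using bp(9) comp_add_r[OF kv comp_hom[OF bp(3) bp(1)] comp_hom[OF bp(4) bp(2)]] by simp
      also have "\<dots> = i1 \<cdot> (g \<cdot> v') \<oplus> i2 \<cdot> (h \<cdot> v')" unfolding g_def h_def
        using assoc[OF kv bp(3) bp(1)] assoc[OF kv bp(4) bp(2)] assoc[of v' W K k S p1 X] assoc[of v' W K k S p2 T] v' k(1) bp(3,4) by simp
      also have "\<dots> = ee" using v' ee_def by simp
      finally have "k \<cdot> v' = ee" .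
      thus "v' = v" using kU[OF W ee pe] v v' by blast
    qed
  qed (use f b k g h comm in auto)
  thus ?thesis by blast
qed

end

context ab begin

lemma pb_hom: "is_pullback C X Y T f p Z g h \<Longrightarrow> f \<in> hm X Y \<and> p \<in> hm T Y \<and> Z \<in> ob \<and> g \<in> hm Z X \<and> h \<in> hm Z T \<and> f \<cdot> g = p \<cdot> h"
  unfolding is_pullback_def by blast
lemma pb_univ: "is_pullback C X Y T f p Z g h \<Longrightarrow> W \<in> ob \<Longrightarrow> a \<in> hm W X \<Longrightarrow> b \<in> hm W T \<Longrightarrow>
   f \<cdot> a = p \<cdot> b \<Longrightarrow> \<exists>u. u \<in> hm W Z \<and> g \<cdot> u = a \<and> h \<cdot> u = b"
  unfolding is_pullback_def by blast

lemma mono_from: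
  assumes f: "f \<in> hm X Y"
    and H: "\<And>T b. T \<in> TT \<Longrightarrow> b \<in> hm T Y \<Longrightarrow> \<exists>P p Z g h r. is_pullback C X Y P f p Z g h \<and> F Z X g \<and> r \<in> hm T P \<and> b = p \<cdot> r"
  shows "stable_mono C TT X Y f"
  unfolding stable_mono_def
proof (intro conjI ballI impI)
  show "f \<in> hm X Y" by (rule f)
  fix W u v assume W: "W \<in> ob" and u: "u \<in> hm W X" and v: "v \<in> hm W X" and e: "E W Y (f \<cdot> u) (f \<cdot> v)"
  define d where "d = u \<oplus> ng v"
  have d: "d \<in> hm W X" unfolding d_def using u v by blast
  have "f \<cdot> d = f \<cdot> u \<oplus> ng (f \<cdot> v)" unfolding d_def
    using comp_add_l[OF u neg_hom[OF v] f] comp_neg_l[OF v f] by simp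
  hence Fd: "F W Y (f \<cdot> d)" using e unfolding E_def by simp
  then obtain T a b where t: "T \<in> TT" "a \<in> hm W T" "b \<in> hm T Y" "f \<cdot> d = b \<cdot> a"
    unfolding F_def by blast
  obtain P p Z g h r where pr: "is_pullback C X Y P f p Z g h" "F Z X g" "r \<in> hm T P" "b = p \<cdot> r"
    using H[OF t(1) t(3)] by blast
  have p: "p \<in> hm P Y" using pb_hom[OF pr(1)] by blast
  have "f \<cdot> d = p \<cdot> (r \<cdot> a)" using t(4) pr(4) assoc[OF t(2) pr(3) p] by simp
  then obtain w where w: "w \<in> hm W Z" "g \<cdot> w = d"
    using pb_univ[OF pr(1) W d comp_hom[OF t(2) pr(3)]] by blast
  have "F W X d" using F_comp_r[OF pr(2) w(1)] w(2) by simp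
  thus "E W X u v" unfolding E_def d_def using u v by simp
qed

lemma mono_pb:
  assumes m: "stable_mono C TT X Y f" and pb: "is_pullback C X Y T f p Z g h" and T: "T \<in> TT"
  shows "F Z X g"
proof -
  have hs: "f \<in> hm X Y" "p \<in> hm T Y" "Z \<in> ob" "g \<in> hm Z X" "h \<in> hm Z T" "f \<cdot> g = p \<cdot> h"
    using pb_hom[OF pb] by blast+
  have X: "X \<in> ob" using hom_ob[OF hs(1)] by blast
  have z0: "z Z X \<in> hm Z X" using hs(3) X by blast
  have "F Z Y (p \<cdot> h)" unfolding F_def using T hs by blast
  hence "E Z Y (f \<cdot> g) (z Z Y)" using E_zero_iff[OF comp_hom[OF hs(4) hs(1)]] hs(6) by simp
  hence "E Z Y (f \<cdot> g) (f \<cdot> z Z X)" using comp_zero[OF hs(1) hs(3)] by simp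
  hence "E Z X g (z Z X)" using m hs(3,4) z0 unfolding stable_mono_def by blast
  thus ?thesis using E_zero_iff[OF hs(4)] by simp
qed

lemma std_to_mono:
  assumes st: "std_left_triangle C TT K Z X Y u g f" and Fg: "F Z X g"
  shows "stable_mono C TT X Y f"
proof -
  obtain TY p k h where s: "is_precover C TT Y TY p" "is_pullback C X Y TY f p Z g h"
    using st unfolding std_left_triangle_def by blast
  have f: "f \<in> hm X Y" using pb_hom[OF s(2)] by blast
  show ?thesis
  proof (rule mono_from[OF f])
    fix T b assume T: "T \<in> TT" and b: "b \<in> hm T Y"
    obtain r where "r \<in> hm T TY" "p \<cdot> r = b" using s(1) T b unfolding is_precover_def by blast
    thus "\<exists>P p Z g h r. is_pullback C X Y P f p Z g h \<and> F Z X g \<and> r \<in> hm T P \<and> b = p \<cdot> r"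
      using s(2) Fg by metis
  qed
qed

lemma mono_transfer:
  assumes m: "stable_mono C TT X' Y' f'" and i3: "stable_iso C TT X X' a3" and i4: "a4 \<in> hm Y Y'"
    and sq: "E X Y' (f' \<cdot> a3) (a4 \<cdot> f)" and f: "f \<in> hm X Y"
  shows "stable_mono C TT X Y f"
  unfolding stable_mono_def
proof (intro conjI ballI impI)
  show "f \<in> hm X Y" by (rule f)
  obtain b3 where b3: "b3 \<in> hm X' X" "E X X (b3 \<cdot> a3) (c_id C X)" and a3: "a3 \<in> hm X X'"
    using i3 unfolding stable_iso_def by blast
  have f': "f' \<in> hm X' Y'" using m unfolding stable_mono_def by blast
  fix W u v assume W: "W \<in> ob" and u: "u \<in> hm W X" and v: "v \<in> hm W X" and e: "E W Y (f \<cdot> u) (f \<cdot> v)"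
  have e4: "E W Y' (a4 \<cdot> (f \<cdot> u)) (a4 \<cdot> (f \<cdot> v))" using E_comp_l[OF e i4] .
  have su: "E W Y' (f' \<cdot> (a3 \<cdot> u)) (a4 \<cdot> (f \<cdot> u))"
    using E_comp_r[OF sq u] assoc[OF u a3 f'] assoc[OF u f i4] by simp
  have sv: "E W Y' (f' \<cdot> (a3 \<cdot> v)) (a4 \<cdot> (f \<cdot> v))"
    using E_comp_r[OF sq v] assoc[OF v a3 f'] assoc[OF v f i4] by simp
  have "E W Y' (f' \<cdot> (a3 \<cdot> u)) (f' \<cdot> (a3 \<cdot> v))"
    using E_trans[OF E_trans[OF su e4] E_sym[OF sv]] .
  hence e3: "E W X' (a3 \<cdot> u) (a3 \<cdot> v)" using m W comp_hom[OF u a3] comp_hom[OF v a3]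
    unfolding stable_mono_def by blast
  have "E W X (b3 \<cdot> (a3 \<cdot> u)) (b3 \<cdot> (a3 \<cdot> v))" using E_comp_l[OF e3 b3(1)] .
  moreover have "E W X (b3 \<cdot> (a3 \<cdot> u)) u"
    using E_comp_r[OF b3(2) u] assoc[OF u a3 b3(1)] id_l[OF u] by simp
  moreover have "E W X (b3 \<cdot> (a3 \<cdot> v)) v"
    using E_comp_r[OF b3(2) v] assoc[OF v a3 b3(1)] id_l[OF v] by simp
  ultimately show "E W X u v" using E_trans E_sym by blast
qed

lemma triangle_to_mono:
  assumes lt: "left_triangle C TT K Z X Y u (z Z X) f" and Z: "Z \<in> ob" and f: "f \<in> hm X Y"
  shows "stable_mono C TT X Y f"
proof -
  obtain K' Z' X' Y' u' g' f' a1 a2 a3 a4 where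
    st: "std_left_triangle C TT K' Z' X' Y' u' g' f'" and
    i: "stable_iso C TT Z Z' a2" "stable_iso C TT X X' a3" "stable_iso C TT Y Y' a4" and
    sq2: "E Z X' (g' \<cdot> a2) (a3 \<cdot> z Z X)" and sq3: "E X Y' (f' \<cdot> a3) (a4 \<cdot> f)"
    using lt unfolding left_triangle_def by blast
  obtain TY p k h where s: "is_pullback C X' Y' TY f' p Z' g' h"
    using st unfolding std_left_triangle_def by blast
  have g': "g' \<in> hm Z' X'" using pb_hom[OF s] by blast
  have a3: "a3 \<in> hm X X'" and a4: "a4 \<in> hm Y Y'" using i unfolding stable_iso_def by blast+
  obtain b2 where b2: "b2 \<in> hm Z' Z" "E Z' Z' (a2 \<cdot> b2) (c_id C Z')" and a2: "a2 \<in> hm Z Z'"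
    using i(1) unfolding stable_iso_def by blast
  have "a3 \<cdot> z Z X = z Z X'" using comp_zero[OF a3 Z] .
  hence "F Z X' (g' \<cdot> a2)" using sq2 E_zero_iff[OF comp_hom[OF a2 g']] by simp
  hence F1: "F Z' X' ((g' \<cdot> a2) \<cdot> b2)" using F_comp_r b2(1) by blast
  have "E Z' X' (g' \<cdot> (a2 \<cdot> b2)) (g' \<cdot> c_id C Z')" using E_comp_l[OF b2(2) g'] .
  hence e1: "E Z' X' g' ((g' \<cdot> a2) \<cdot> b2)" using id_r[OF g'] assoc[OF b2(1) a2 g'] E_sym by simp
  have X': "X' \<in> ob" "Z' \<in> ob" using hom_ob[OF g'] by blast+
  have "E Z' X' ((g' \<cdot> a2) \<cdot> b2) (z Z' X')" using E_zero_iff F1 comp_hom[OF b2(1) comp_hom[OF a2 g']] by blast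
  hence "F Z' X' g'" using E_trans[OF e1] E_zero_iff[OF g'] by blast
  hence "stable_mono C TT X' Y' f'" using std_to_mono[OF st] by blast
  thus ?thesis using mono_transfer[OF _ i(2) a4 sq3 f] by blast
qed

lemma iso_id: "X \<in> ob \<Longrightarrow> stable_iso C TT X X (c_id C X)"
  unfolding stable_iso_def using id_hom id_l E_refl by metis

lemma mono_to_triangle:
  assumes m: "stable_mono C TT X Y f" and pc: "is_precover C TT Y TY p"
    and K: "is_kernel C TY Y p K k"
  shows "\<exists>Z u. Z \<in> ob \<and> u \<in> hm K Z \<and> left_triangle C TT K Z X Y u (z Z X) f"
proof -
  have f: "f \<in> hm X Y" using m unfolding stable_mono_def by blast
  have p: "p \<in> hm TY Y" and TY: "TY \<in> TT" using pc unfolding is_precover_def by blast+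
  have k: "k \<in> hm K TY" "K \<in> ob" "p \<cdot> k = z K Y" using K unfolding is_kernel_def by blast+
  have ob: "X \<in> ob" "Y \<in> ob" using hom_ob[OF f] by blast+
  obtain Z g h where pb: "is_pullback C X Y TY f p Z g h" using pullback_ex[OF f p] by blast
  have hs: "Z \<in> ob" "g \<in> hm Z X" "h \<in> hm Z TY" using pb_hom[OF pb] by blast+
  have "f \<cdot> z K X = p \<cdot> k" using comp_zero[OF f k(2)] k(3) by simp
  then obtain u where u: "u \<in> hm K Z" "g \<cdot> u = z K X" "h \<cdot> u = k"
    using pb_univ[OF pb k(2) zero_hom[OF k(2) ob(1)] k(1)] by blast
  have st: "std_left_triangle C TT K Z X Y u g f"
    unfolding std_left_triangle_def using pc K pb u by blast
  have Fg: "F Z X g" using mono_pb[OF m pb TY] .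
  have z0: "z Z X \<in> hm Z X" using hs(1) ob(1) by blast
  have lt: "left_triangle C TT K Z X Y u (z Z X) f"
    unfolding left_triangle_def
  proof (intro conjI exI)
    show "std_left_triangle C TT K Z X Y u g f" by (rule st)
    show "stable_iso C TT K K (c_id C K)" using iso_id k(2) .
    show "stable_iso C TT Z Z (c_id C Z)" using iso_id hs(1) .
    show "stable_iso C TT X X (c_id C X)" using iso_id ob(1) .
    show "stable_iso C TT Y Y (c_id C Y)" using iso_id ob(2) .
    show "E K Z (u \<cdot> c_id C K) (c_id C Z \<cdot> u)" using E_refl[OF u(1)] id_l[OF u(1)] id_r[OF u(1)] by simp
    show "E Z X (g \<cdot> c_id C Z) (c_id C X \<cdot> z Z X)"
      using E_zero_iff[OF hs(2)] Fg id_l[OF z0] id_r[OF hs(2)] by simp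
    show "E X Y (f \<cdot> c_id C X) (c_id C Y \<cdot> f)" using E_refl[OF f] id_l[OF f] id_r[OF f] by simp
  qed (use u z0 f in auto)
  thus ?thesis using hs u by blast
qed

end


theorem proposition2p1:
  fixes C :: "('o, 'm) addcat" and TT :: "'o set"
    and X Y :: 'o and f :: 'm
  assumes "is_abelian C"
    and "good_subcat C TT"
    and "X \<in> c_ob C" and "Y \<in> c_ob C"
    and "f \<in> c_hom C X Y"
  shows "(stable_mono C TT X Y f \<longleftrightarrow>
           (\<forall>T \<in> TT. \<forall>p \<in> c_hom C T Y. \<forall>Z g h.
              is_pullback C X Y T f p Z g h \<longrightarrow> factors_through C TT Z X g))
       \<and> (contravariantly_finite C TT \<longrightarrow>
           (stable_mono C TT X Y f \<longleftrightarrow>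
              (\<exists>TY p. is_precover C TT Y TY p \<and>
                 (\<forall>Z g h. is_pullback C X Y TY f p Z g h \<longrightarrow> factors_through C TT Z X g)))
         \<and> (stable_mono C TT X Y f \<longleftrightarrow>
              (\<exists>TY p K k Z u. is_precover C TT Y TY p \<and> is_kernel C TY Y p K k \<and>
                 Z \<in> c_ob C \<and> u \<in> c_hom C K Z \<and>
                 left_triangle C TT K Z X Y u (c_zero C Z X) f)))"
proof -
  interpret ab C TT using assms(1,2) by unfold_locales
  have f: "f \<in> c_hom C X Y" by (rule assms(5))
  have P1: "stable_mono C TT X Y f \<longleftrightarrow>
           (\<forall>T \<in> TT. \<forall>p \<in> c_hom C T Y. \<forall>Z g h.
              is_pullback C X Y T f p Z g h \<longrightarrow> factors_through C TT Z X g)"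
  proof
    assume m: "stable_mono C TT X Y f"
    show "\<forall>T \<in> TT. \<forall>p \<in> c_hom C T Y. \<forall>Z g h.
              is_pullback C X Y T f p Z g h \<longrightarrow> factors_through C TT Z X g"
      using mono_pb[OF m] by blast
  next
    assume H: "\<forall>T \<in> TT. \<forall>p \<in> c_hom C T Y. \<forall>Z g h.
              is_pullback C X Y T f p Z g h \<longrightarrow> factors_through C TT Z X g"
    show "stable_mono C TT X Y f"
    proof (rule mono_from[OF f])
      fix T b assume T: "T \<in> TT" and b: "b \<in> c_hom C T Y"
      obtain Z g h where pb: "is_pullback C X Y T f b Z g h" using pullback_ex[OF f b] by blast
      have "c_id C T \<in> c_hom C T T" using id_hom TT_ob[OF T] by blast
      moreover have "b = c_comp C b (c_id C T)" using id_r[OF b] by simp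
      moreover have "factors_through C TT Z X g" using H T b pb by blast
      ultimately show "\<exists>P p Z g h r. is_pullback C X Y P f p Z g h \<and> factors_through C TT Z X g
          \<and> r \<in> c_hom C T P \<and> b = c_comp C p r" using pb by blast
    qed
  qed
  have P2: "contravariantly_finite C TT \<Longrightarrow>
           (stable_mono C TT X Y f \<longleftrightarrow>
              (\<exists>TY p. is_precover C TT Y TY p \<and>
                 (\<forall>Z g h. is_pullback C X Y TY f p Z g h \<longrightarrow> factors_through C TT Z X g)))"
  proof
    assume cf: "contravariantly_finite C TT" and m: "stable_mono C TT X Y f"
    obtain TY p where pc: "is_precover C TT Y TY p" using cf assms(4) unfolding contravariantly_finite_def by blast
    have "TY \<in> TT" using pc unfolding is_precover_def by blast
    thus "\<exists>TY p. is_precover C TT Y TY p \<and>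
                 (\<forall>Z g h. is_pullback C X Y TY f p Z g h \<longrightarrow> factors_through C TT Z X g)"
      using pc mono_pb[OF m] by blast
  next
    assume "\<exists>TY p. is_precover C TT Y TY p \<and>
                 (\<forall>Z g h. is_pullback C X Y TY f p Z g h \<longrightarrow> factors_through C TT Z X g)"
    then obtain TY p where pc: "is_precover C TT Y TY p" and
      H: "\<forall>Z g h. is_pullback C X Y TY f p Z g h \<longrightarrow> factors_through C TT Z X g" by blast
    have p: "p \<in> c_hom C TY Y" using pc unfolding is_precover_def by blast
    show "stable_mono C TT X Y f"
    proof (rule mono_from[OF f])
      fix T b assume T: "T \<in> TT" and b: "b \<in> c_hom C T Y"
      obtain r where r: "r \<in> c_hom C T TY" "c_comp C p r = b" using pc T b unfolding is_precover_def by blast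
      obtain Z g h where pb: "is_pullback C X Y TY f p Z g h" using pullback_ex[OF f p] by blast
      show "\<exists>P p Z g h r. is_pullback C X Y P f p Z g h \<and> factors_through C TT Z X g
          \<and> r \<in> c_hom C T P \<and> b = c_comp C p r" using pb H r by metis
    qed
  qed
  have P3: "contravariantly_finite C TT \<Longrightarrow>
           (stable_mono C TT X Y f \<longleftrightarrow>
              (\<exists>TY p K k Z u. is_precover C TT Y TY p \<and> is_kernel C TY Y p K k \<and>
                 Z \<in> c_ob C \<and> u \<in> c_hom C K Z \<and>
                 left_triangle C TT K Z X Y u (c_zero C Z X) f))"
  proof
    assume cf: "contravariantly_finite C TT" and m: "stable_mono C TT X Y f"
    obtain TY p where pc: "is_precover C TT Y TY p" using cf assms(4) unfolding contravariantly_finite_def by blast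
    have p: "p \<in> c_hom C TY Y" using pc unfolding is_precover_def by blast
    obtain K k where K: "is_kernel C TY Y p K k" using assms(1) p unfolding is_abelian_def by blast
    show "\<exists>TY p K k Z u. is_precover C TT Y TY p \<and> is_kernel C TY Y p K k \<and>
                 Z \<in> c_ob C \<and> u \<in> c_hom C K Z \<and>
                 left_triangle C TT K Z X Y u (c_zero C Z X) f"
      using mono_to_triangle[OF m pc K] pc K by blast
  next
    assume "\<exists>TY p K k Z u. is_precover C TT Y TY p \<and> is_kernel C TY Y p K k \<and>
                 Z \<in> c_ob C \<and> u \<in> c_hom C K Z \<and>
                 left_triangle C TT K Z X Y u (c_zero C Z X) f"
    then obtain K Z u where "Z \<in> c_ob C" "left_triangle C TT K Z X Y u (c_zero C Z X) f" by blast
    thus "stable_mono C TT X Y f" using triangle_to_mono f by blast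
  qed
  show ?thesis using P1 P2 P3 by blast
qed

end
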